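(* Let $n\ge3$ be odd and write $c_j=\cos(2\pi j/n)$. Then $$Su_1:=\frac32\sum_{j=0}^{\lfloor n/4\rfloor}\sum_{k=0}^{\lfloor n/4\rfloor}\frac{1}{|c_j-c_k+1|}\ \le\ \frac38\,n^2\ln n.$$
   Context: $\ln$ denotes the natural logarithm. (This quantity is one of four pieces of $\sum_{j=0}^{(n-1)/2}\sum_{k=n}^{(3n-1)/2}1/|\lambda_j-\lambda_k|=\frac32\sum_{j,k=0}^{(n-1)/2}1/|c_j-c_k+1|$, where $\lambda_j$ are the eigenvalues of the normalized adjacency matrix of the Cayley graph of $D_{2n}$ with generators $\{a,a^{-1},b\}$.) *)

theory Defs
  imports Complex_Main
begin

end

theory Submission imports Defs begin
lemma cos_lb1: assumes "0 \<le> (x::real)" shows "1 - x^2/2 \<le> cos x"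
proof -
  have c: "cos x = 1 - 2 * (sin (x/2))^2"
    using cos_double_sin[of "x/2"] by simp
  have "\<bar>sin (x/2)\<bar> \<le> \<bar>x/2\<bar>" by (rule abs_sin_x_le_abs_x)
  hence "(sin (x/2))^2 \<le> (x/2)^2"
    by (metis abs_le_square_iff)
  thus ?thesis using c by (simp add: power_divide)
qed

lemma C: "(fact 3 :: real) = 6" by (simp add: numeral_3_eq_3)
lemma B: "(\<Sum>m<3. sin_coeff m * y ^ m) = (y::real)"
  by (simp add: numeral_3_eq_3 sin_coeff_def)
lemma sin_lb: "y - \<bar>y\<bar>^3/6 \<le> sin (y::real)"
proof -
  have "\<bar>sin y - (\<Sum>m<3. sin_coeff m * y ^ m)\<bar> \<le> inverse (fact 3) * \<bar>y\<bar> ^ 3"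
    by (rule Maclaurin_sin_bound)
  hence h: "\<bar>sin y - y\<bar> \<le> inverse 6 * \<bar>y\<bar> ^ 3" by (simp only: B C)
  have e: "inverse 6 * \<bar>y\<bar> ^ 3 = \<bar>y\<bar>^3/6" by (simp add: field_simps)
  have "\<bar>sin y - y\<bar> \<le> \<bar>y\<bar>^3/6" using h unfolding e .
  thus ?thesis using abs_le_iff[of "sin y - y" "\<bar>y\<bar>^3/6"] by linarith
qed

lemma pi_gt_28: "14/5 \<le> pi"
proof (rule ccontr)
  assume "\<not> 14/5 \<le> pi"
  hence "pi/2 \<le> 7/5" by simp
  hence "(pi/2)^2 \<le> (7/5)^2" by (intro power_mono) auto
  hence "(pi/2)^2 \<le> 49/25" by (simp add: power2_eq_square)
  hence "0 < 1 - (pi/2)^2/2" by linarith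
  also have "\<dots> \<le> cos (pi/2)" by (rule cos_lb1) simp
  finally show False by simp
qed

lemma jordan: assumes "0 \<le> t" "t \<le> pi/2" shows "1 - 2*t/pi \<le> cos t"
proof (cases "t \<le> 1")
  case True
  have "t * pi \<le> 1 * 4" using True assms pi_less_4 pi_gt_zero
    by (intro mult_mono) auto
  hence a: "t*(t*pi) \<le> t*4" using assms(1) by (intro mult_left_mono) auto
  have "t*t/2 = (t*(t*pi)) / (2*pi)" by (simp add: field_simps)
  also have "\<dots> \<le> (t*4) / (2*pi)" using a by (intro divide_right_mono) auto
  also have "\<dots> = 2*t/pi" by (simp add: field_simps)
  finally have "t*t/2 \<le> 2*t/pi" .
  thus ?thesis using cos_lb1[OF assms(1)] by (simp add: power2_eq_square)
next
  case False
  define y where "y = pi/2 - t"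
  have y0: "0 \<le> y" and y1: "y \<le> 1" using assms False pi_less_4 y_def
    by auto
  have cs: "cos t = sin y" by (simp add: y_def cos_sin_eq)
  have yy: "y*y \<le> 1" using y0 y1 by (simp add: mult_le_one)
  have "2/pi \<le> 2/(14/5)" using pi_gt_28 by (intro divide_left_mono) auto
  also have "2/(14/5::real) = 5/7" by simp
  finally have "2/pi \<le> 5/7" .
  hence "2/pi \<le> 1 - y*y/6" using yy by linarith
  hence "y * (2/pi) \<le> y * (1 - y*y/6)" using y0 by (rule mult_left_mono)
  hence "2*y/pi \<le> y - \<bar>y\<bar>^3/6" using y0 by (simp add: power3_eq_cube algebra_simps)
  hence "2*y/pi \<le> sin y" using sin_lb[of y] by linarith
  moreover have "2*y/pi = 1 - 2*t/pi" by (simp add: y_def field_simps)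
  ultimately show ?thesis using cs by simp
qed

lemma harm: assumes "0 < (x::real)"
  shows "(\<Sum>j\<in>{0..m}. 1/(x + 4*real(m-j))) \<le> 1/x + ln((x + 4*real m)/x)/4"
proof (induction m)
  case 0
  then show ?case by simp
next
  case (Suc m)
  have sh: "(\<Sum>j\<in>{0..Suc m}. 1/(x + 4*real(Suc m-j))) = 1/(x + 4*real (Suc m)) + (\<Sum>j\<in>{0..m}. 1/(x + 4*real(m-j)))"
    by (subst sum.atLeast0_atMost_Suc_shift) simp
  define a where "a = x + 4*real m"
  define b where "b = x + 4*real (Suc m)"
  have a0: "0 < a" and b0: "0 < b" and ba: "b = a + 4" using assms by (auto simp: a_def b_def)
  have "ln (a/b) \<le> a/b - 1" using a0 b0 by (intro ln_le_minus_one) simp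
  also have "a/b - 1 = - 4/b" using b0 ba by (simp add: field_simps)
  finally have l1: "1/b \<le> (- ln (a/b))/4" by simp
  have "- ln (a/b) = ln (b/x) - ln (a/x)" using a0 b0 assms by (simp add: ln_div)
  with l1 have "1/b \<le> ln (b/x)/4 - ln (a/x)/4" by simp
  then show ?case using Suc sh unfolding a_def b_def by linarith
qed

lemma term_le:
  assumes n3: "3 \<le> n" and od: "odd n" and j: "j \<le> n div 4"
  shows "1 / \<bar>cos (2*pi*real j / real n) - cos (2*pi*real k / real n) + 1\<bar> \<le> real n / (real n - 4*real j)"
proof -
  have "4*j \<le> n" using j by linarith
  moreover have "4*j \<noteq> n" using od by auto
  ultimately have lt: "4*real j < real n" by linarith
  have np: "0 < real n" using n3 by simp
  have t0: "0 \<le> 2*pi*real j / real n" by simp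
  have t1: "2*pi*real j / real n \<le> pi/2" using lt np
    by (simp add: field_simps)
  have "1 - 2*(2*pi*real j / real n)/pi \<le> cos (2*pi*real j / real n)"
    by (rule jordan[OF t0 t1])
  moreover have "1 - 2*(2*pi*real j / real n)/pi = (real n - 4*real j)/real n"
    using np by (simp add: field_simps)
  ultimately have cj: "(real n - 4*real j)/real n \<le> cos (2*pi*real j / real n)" by simp
  have pos: "0 < (real n - 4*real j)/real n" using lt np by simp
  have "cos (2*pi*real k / real n) \<le> 1" by simp
  hence d: "(real n - 4*real j)/real n \<le> cos (2*pi*real j / real n) - cos (2*pi*real k / real n) + 1"
    using cj by linarith
  define D where "D = cos (2*pi*real j / real n) - cos (2*pi*real k / real n) + 1"
  have Dp: "0 < D" using d pos unfolding D_def by linarith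
  define p where "p = (real n - 4*real j)/real n"
  have pp: "0 < p" using pos unfolding p_def .
  have DP: "0 < D * p" by (rule mult_pos_pos[OF Dp pp])
  have pD: "p \<le> D" using d unfolding p_def D_def .
  have "1 / D \<le> 1 / p"
    using divide_left_mono[OF pD _ DP, of 1] by simp
  hence "1 / D \<le> 1 / ((real n - 4*real j)/real n)" unfolding p_def .
  hence "1 / \<bar>cos (2*pi*real j / real n) - cos (2*pi*real k / real n) + 1\<bar> \<le> 1 / ((real n - 4*real j)/real n)"
    using Dp unfolding D_def by simp
  also have "\<dots> = real n / (real n - 4*real j)" by simp
  finally show ?thesis .
qed

lemma term0: "1 / \<bar>cos (2*pi*real (0::nat) / real n) - cos y + 1\<bar> \<le> 1"
proof -
  have h: "1 \<le> 2 - cos y" by simp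
  have h2: "0 < 2 - cos y" using h by linarith
  hence "\<bar>2 - cos y\<bar> = 2 - cos y" by (intro abs_of_nonneg) linarith
  moreover have "1 / (2 - cos y) \<le> 1 / 1"
    by (rule divide_left_mono) (use h h2 in auto)
  ultimately have "1 / \<bar>2 - cos y\<bar> \<le> 1" by simp
  thus ?thesis by simp
qed

lemma termjj: "1 / \<bar>cos y - cos y + 1\<bar> = (1::real)" by simp


theorem mainTheorem4:
  fixes n :: nat
  assumes "n \<ge> 3" and "odd n"
  shows "(3/2) * (\<Sum>j\<in>{0..n div 4}. \<Sum>k\<in>{0..n div 4}.
            1 / \<bar>cos (2*pi*real j / real n) - cos (2*pi*real k / real n) + 1\<bar>)
         \<le> (3/8) * (real n)^2 * ln (real n)"
proof -
  define T where "T = (\<lambda>j k::nat. 1 / \<bar>cos (2*pi*real j / real n) - cos (2*pi*real k / real n) + 1\<bar>)"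
  define m where "m = n div 4"
  have S: "(\<Sum>j\<in>{0..n div 4}. \<Sum>k\<in>{0..n div 4}.
            1 / \<bar>cos (2*pi*real j / real n) - cos (2*pi*real k / real n) + 1\<bar>)
        = (\<Sum>j\<in>{0..m}. \<Sum>k\<in>{0..m}. T j k)" by (simp add: T_def m_def)
  have Tle: "T j k \<le> real n / (real n - 4*real j)" if "j \<le> m" for j k
    unfolding T_def using term_le[OF assms, of j k] that m_def by simp
  have T0: "T 0 k \<le> 1" for k unfolding T_def using term0[of n] by simp
  have Tjj: "T j j = 1" for j unfolding T_def by simp
  have m4: "4*m < n" using assms(2) unfolding m_def by presburger
  have m4': "n < 4*m + 4" unfolding m_def by linarith
  show ?thesis
  proof (cases "n \<ge> 9")
    case True
    define x where "x = real n - 4 * real m"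
    have x1: "1 \<le> x" using m4 unfolding x_def by linarith
    have "(\<Sum>j\<in>{0..m}. \<Sum>k\<in>{0..m}. T j k) \<le> (\<Sum>j\<in>{0..m}. \<Sum>k\<in>{0..m}. real n / (real n - 4*real j))"
      by (intro sum_mono Tle) auto
    also have "\<dots> = (\<Sum>j\<in>{0..m}. real (m+1) * (real n * (1 / (x + 4*real(m-j)))))"
    proof (rule sum.cong[OF refl])
      fix j assume "j \<in> {0..m}"
      hence "real n - 4*real j = x + 4*real(m-j)" unfolding x_def by (simp add: of_nat_diff)
      thus "(\<Sum>k\<in>{0..m}. real n / (real n - 4*real j)) = real (m+1) * (real n * (1 / (x + 4*real(m-j))))"
        by simp
    qed
    also have "\<dots> = real (m+1) * real n * (\<Sum>j\<in>{0..m}. 1 / (x + 4*real(m-j)))"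
      by (simp add: sum_distrib_left mult.assoc)
    also have "\<dots> \<le> real (m+1) * real n * (1/x + ln((x + 4*real m)/x)/4)"
      by (intro mult_left_mono harm) (use x1 in auto)
    also have "\<dots> \<le> real (m+1) * real n * (1 + ln (real n)/4)"
    proof (intro mult_left_mono)
      have "1/x \<le> 1" using x1 by simp
      moreover have "ln((x + 4*real m)/x) \<le> ln (real n)"
        using x1 by (simp add: x_def ln_div)
      ultimately show "1/x + ln((x + 4*real m)/x)/4 \<le> 1 + ln (real n)/4" by linarith
    qed auto
    finally have S1: "(\<Sum>j\<in>{0..m}. \<Sum>k\<in>{0..m}. T j k) \<le> real (m+1) * real n * (1 + ln (real n)/4)" .
    define L where "L = ln (real n)"
    have "exp 2 = exp 1 * exp (1::real)" by (simp flip: exp_add)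
    also have "\<dots> \<le> 3 * 3" using exp_le by (intro mult_mono) auto
    finally have "exp 2 \<le> real n" using True by simp
    hence L2: "2 \<le> L" unfolding L_def using True by (subst ln_ge_iff) auto
    have M: "4 * real (m+1) \<le> real n + 3" using m4 by simp
    have n9: "9 \<le> real n" using True by simp
    have "2 * (3 * real n - 3) \<le> L * (3 * real n - 3)" using L2 n9 by (intro mult_right_mono) auto
    hence h1: "6 * real n - 6 + 3*L \<le> 3 * (L * real n)" by (simp add: algebra_simps)
    have "(real n + 3) * (1 + L/4) = real n + 3 + (L * real n)/4 + 3*L/4" by (simp add: algebra_simps)
    hence key: "(real n + 3) * (1 + L/4) \<le> real n * L" using h1 n9 by (simp add: mult.commute)
    have "(3/2) * (real (m+1) * real n * (1 + L/4)) = (3/8) * real n * (1 + L/4) * (4 * real (m+1))"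
      by simp
    also have "\<dots> \<le> (3/8) * real n * (1 + L/4) * (real n + 3)"
      using M L2 by (intro mult_left_mono) auto
    also have "\<dots> = (3/8) * real n * ((real n + 3) * (1 + L/4))" by simp
    also have "\<dots> \<le> (3/8) * real n * (real n * L)"
      using key by (intro mult_left_mono) auto
    also have "\<dots> = (3/8) * (real n)^2 * L" by (simp add: power2_eq_square)
    finally have "(3/2) * (real (m+1) * real n * (1 + L/4)) \<le> (3/8) * (real n)^2 * L" .
    thus ?thesis using S S1 unfolding L_def by linarith
  next
    case False
    hence "n = 3 \<or> n = 5 \<or> n = 7" using assms by presburger
    moreover {
      assume n3: "n = 3"
      hence "m = 0" unfolding m_def by simp
      hence "(\<Sum>j\<in>{0..m}. \<Sum>k\<in>{0..m}. T j k) = 1" using Tjj by simp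
      moreover have "1 \<le> ln (3::real)" using exp_le
        by (subst ln_ge_iff) auto
      ultimately have ?thesis using S n3 by simp
    }
    moreover {
      assume n57: "n = 5 \<or> n = 7"
      hence m1: "m = 1" unfolding m_def by auto
      have "{0..1::nat} = {0,1}" by auto
      hence "(\<Sum>j\<in>{0..m}. \<Sum>k\<in>{0..m}. T j k) = T 0 0 + T 0 1 + T 1 0 + T 1 1"
        using m1 by simp
      moreover have "T 1 0 \<le> real n / (real n - 4)" using Tle[of 1 0] m1 by simp
      ultimately have Sb: "(\<Sum>j\<in>{0..m}. \<Sum>k\<in>{0..m}. T j k) \<le> 3 + real n / (real n - 4)"
        using T0[of 0] T0[of 1] Tjj[of 1] by linarith
      {
        assume n5: "n = 5"
        have "exp (4/3) < (5::real)"
        proof (rule ccontr)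
          assume "\<not> exp (4/3) < (5::real)"
          hence "5^3 \<le> (exp (4/3::real))^3" by (intro power_mono) auto
          also have "(exp (4/3::real))^3 = exp 4" by (simp flip: exp_of_nat_mult)
          also have "exp (4::real) = exp 1 ^ 4" by (simp flip: exp_of_nat_mult)
          also have "\<dots> \<le> 3^4" using exp_le by (intro power_mono) auto
          finally show False by simp
        qed
        hence "4/3 \<le> ln (5::real)" by (subst ln_ge_iff) auto
        hence ?thesis using S Sb n5 by simp
      }
      moreover {
        assume n7: "n = 7"
        have "1 \<le> ln (7::real)" using exp_le
          by (subst ln_ge_iff) auto
        hence ?thesis using S Sb n7 by simp
      }
      ultimately have ?thesis using n57 by blast
    }
    ultimately show ?thesis by blast
  qed
qed

end
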